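(* Let $r,s$ be positive integers, let $P$ be a lattice path and let $Q=P+(r,s)$ be its translate by $(r,s)$. Suppose there are integers $i<k$ such that $P$ and $Q$ both meet the lines $x+y=i$ and $x+y=k$, and $$x_i(P)>x_i(Q)\quad\text{and}\quad x_k(P)\le x_k(Q).$$ Then $P$ is invalid.
   Context: A lattice path is a path in $\mathbb{Z}^2$ consisting of unit steps north ($N$-steps, adding $(0,1)$) and east ($E$-steps, adding $(1,0)$). For fixed positive integers $r,s$, points $v,w\in\mathbb{Z}^2$ are equivalent if $v-w=\ell(r,s)$ for some $\ell\in\mathbb{Z}$; $[v]$ denotes the class of $v$. A lattice path $P$ is valid if whenever $P$ enters a point $v$ with an $E$-step, every later point of $P$ in $[v]$ is also entered by an $E$-step; otherwise it is invalid. For a path $P$ and a point $v$, $P+v$ is the path obtained by adding $v$ to every point of $P$. For a lattice path $P$ and integer $i$, $v_i(P)=(x_i(P),y_i(P))$ denotes the (unique) point where $P$ meets the line $x+y=i$. *)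

theory Defs
  imports Main
begin

definition lattice_path :: "(int \<times> int) list \<Rightarrow> bool" where
  "lattice_path ps \<longleftrightarrow> ps \<noteq> [] \<and>
     (\<forall>j. Suc j < length ps \<longrightarrow>
        ps ! Suc j = (fst (ps ! j), snd (ps ! j) + 1) \<or>
        ps ! Suc j = (fst (ps ! j) + 1, snd (ps ! j)))"

definition E_entered :: "(int \<times> int) list \<Rightarrow> nat \<Rightarrow> bool" where
  "E_entered ps j \<longleftrightarrow> 0 < j \<and> j < length ps \<and>
     ps ! j = (fst (ps ! (j - 1)) + 1, snd (ps ! (j - 1)))"

definition equiv_rs :: "int \<Rightarrow> int \<Rightarrow> int \<times> int \<Rightarrow> int \<times> int \<Rightarrow> bool" where
  "equiv_rs r s v w \<longleftrightarrow> (\<exists>l::int. fst v - fst w = l * r \<and> snd v - snd w = l * s)"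

definition valid_path :: "int \<Rightarrow> int \<Rightarrow> (int \<times> int) list \<Rightarrow> bool" where
  "valid_path r s ps \<longleftrightarrow>
     (\<forall>j l. E_entered ps j \<and> j < l \<and> l < length ps \<and> equiv_rs r s (ps ! l) (ps ! j)
        \<longrightarrow> E_entered ps l)"

definition translate_path :: "(int \<times> int) list \<Rightarrow> int \<times> int \<Rightarrow> (int \<times> int) list" where
  "translate_path ps v = map (\<lambda>p. (fst p + fst v, snd p + snd v)) ps"

definition meets_line :: "(int \<times> int) list \<Rightarrow> int \<Rightarrow> bool" where
  "meets_line ps i \<longleftrightarrow> (\<exists>p \<in> set ps. fst p + snd p = i)"

definition x_at :: "(int \<times> int) list \<Rightarrow> int \<Rightarrow> int" where
  "x_at ps i = fst (THE p. p \<in> set ps \<and> fst p + snd p = i)"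

end

theory Submission
  imports Defs
begin

lemma lp_step:
  assumes "lattice_path P" "Suc j < length P"
  shows "P ! Suc j = (fst (P ! j), snd (P ! j) + 1) \<or> P ! Suc j = (fst (P ! j) + 1, snd (P ! j))"
  using assms unfolding lattice_path_def by blast

lemma lp_sum:
  assumes "lattice_path P" "j < length P"
  shows "fst (P ! j) + snd (P ! j) = fst (P ! 0) + snd (P ! 0) + int j"
  using assms(2)
proof (induction j)
  case 0 then show ?case by simp
next
  case (Suc j)
  then have "j < length P" by simp
  with Suc lp_step[OF assms(1) Suc.prems] show ?case by auto
qed

lemma lp_meets:
  assumes "lattice_path P" "meets_line P t"
  shows "fst (P ! 0) + snd (P ! 0) \<le> t \<and> t < fst (P ! 0) + snd (P ! 0) + int (length P)"
proof -
  obtain p where p: "p \<in> set P" "fst p + snd p = t" using assms(2) unfolding meets_line_def by blast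
  then obtain j where j: "j < length P" "p = P ! j" by (auto simp: in_set_conv_nth)
  with lp_sum[OF assms(1) j(1)] p show ?thesis by auto
qed

lemma lp_x_at:
  assumes "lattice_path P" "meets_line P t"
  shows "x_at P t = fst (P ! nat (t - (fst (P ! 0) + snd (P ! 0))))"
proof -
  define a where "a = fst (P ! 0) + snd (P ! 0)"
  define j where "j = nat (t - a)"
  have b: "a \<le> t" "t < a + int (length P)" using lp_meets[OF assms] a_def by auto
  then have jl: "j < length P" unfolding j_def by auto
  have sj: "fst (P ! j) + snd (P ! j) = t" using lp_sum[OF assms(1) jl] b unfolding j_def a_def by auto
  have "(THE p. p \<in> set P \<and> fst p + snd p = t) = P ! j"
  proof (rule the_equality)
    show "P ! j \<in> set P \<and> fst (P ! j) + snd (P ! j) = t" using jl sj by auto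
  next
    fix p assume "p \<in> set P \<and> fst p + snd p = t"
    then obtain j' where j': "j' < length P" "p = P ! j'" "fst p + snd p = t" by (auto simp: in_set_conv_nth)
    with lp_sum[OF assms(1) j'(1)] sj lp_sum[OF assms(1) jl] have "j' = j" by auto
    with j' show "p = P ! j" by simp
  qed
  then show ?thesis unfolding x_at_def j_def a_def by simp
qed

lemma translate_lp:
  assumes "lattice_path P"
  shows "lattice_path (translate_path P (r, s))"
  using assms unfolding lattice_path_def translate_path_def by auto

lemma disc_ivt:
  fixes g :: "nat \<Rightarrow> int"
  assumes "g j1 > 0" "g j2 \<le> 0" "j1 < j2"
  shows "\<exists>j. j1 \<le> j \<and> j < j2 \<and> g j > 0 \<and> g (Suc j) \<le> 0"
  using assms
proof (induction j2)
  case 0 then show ?case by simp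
next
  case (Suc j2)
  show ?case
  proof (cases "g j2 > 0")
    case True then show ?thesis using Suc by (intro exI[of _ j2]) auto
  next
    case False
    then have "j1 < j2" using Suc by (metis less_Suc_eq not_le)
    with Suc.IH False Suc.prems show ?thesis by (meson less_SucI not_le)
  qed
qed

theorem mainTheorem2:
  fixes r s i k :: int and P Q :: "(int \<times> int) list"
  assumes "r > 0" and "s > 0"
    and "lattice_path P"
    and "Q = translate_path P (r, s)"
    and "i < k"
    and "meets_line P i" and "meets_line Q i"
    and "meets_line P k" and "meets_line Q k"
    and "x_at P i > x_at Q i"
    and "x_at P k \<le> x_at Q k"
  shows "\<not> valid_path r s P"
proof -
  define a where "a = fst (P ! 0) + snd (P ! 0)"
  define n where "n = length P"
  define m where "m = nat (r + s)"
  have lpQ: "lattice_path Q" using translate_lp[OF assms(3)] assms(4) by simp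
  have ne: "P \<noteq> []" using assms(3) unfolding lattice_path_def by simp
  have Qn: "length Q = n" using assms(4) unfolding translate_path_def n_def by simp
  have Qj: "\<And>j. j < n \<Longrightarrow> Q ! j = (fst (P ! j) + r, snd (P ! j) + s)"
    using assms(4) unfolding translate_path_def n_def by simp
  have Q0: "fst (Q ! 0) + snd (Q ! 0) = a + r + s" using Qj[of 0] ne unfolding a_def n_def by simp
  have mi: "a + r + s \<le> i" using lp_meets[OF lpQ assms(7)] Q0 by simp
  have mk: "k < a + int n" using lp_meets[OF assms(3) assms(8)] unfolding a_def n_def by simp
  define j1 where "j1 = nat (i - a - r - s)"
  define j2 where "j2 = nat (k - a - r - s)"
  have j12: "j1 < j2" "j2 + m < n" using mi mk assms(1,2,5) unfolding j1_def j2_def m_def by auto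
  define g where "g j = fst (P ! (j + m)) - fst (P ! j) - r" for j
  have ni: "nat (i - a) = j1 + m" using mi assms(1,2) unfolding j1_def m_def by (simp add: nat_add_distrib[symmetric])
  have nk: "nat (k - a) = j2 + m" using mi assms(1,2,5) unfolding j2_def m_def by (simp add: nat_add_distrib[symmetric])
  have ni': "nat (i - (a + r + s)) = j1" unfolding j1_def by (simp add: algebra_simps)
  have nk': "nat (k - (a + r + s)) = j2" unfolding j2_def by (simp add: algebra_simps)
  have xPi: "x_at P i = fst (P ! (j1 + m))" using lp_x_at[OF assms(3,6)] ni unfolding a_def by simp
  have xPk: "x_at P k = fst (P ! (j2 + m))" using lp_x_at[OF assms(3,8)] nk unfolding a_def by simp
  have xQi: "x_at Q i = fst (P ! j1) + r" using lp_x_at[OF lpQ assms(7)] ni' Q0 Qj[of j1] j12 by simp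
  have xQk: "x_at Q k = fst (P ! j2) + r" using lp_x_at[OF lpQ assms(9)] nk' Q0 Qj[of j2] j12 by simp
  have "g j1 > 0" "g j2 \<le> 0" using xPi xQi xPk xQk assms(10,11) unfolding g_def by auto
  then obtain j where j: "j1 \<le> j" "j < j2" "g j > 0" "g (Suc j) \<le> 0" using disc_ivt j12(1) by blast
  have jn: "Suc (j + m) < n" using j j12 by simp
  have sj: "Suc j < n" using jn by simp
  have stj: "P ! Suc j = (fst (P ! j), snd (P ! j) + 1) \<or> P ! Suc j = (fst (P ! j) + 1, snd (P ! j))"
    using lp_step[OF assms(3)] sj unfolding n_def by blast
  have stm: "P ! Suc (j + m) = (fst (P ! (j + m)), snd (P ! (j + m)) + 1) \<or> P ! Suc (j + m) = (fst (P ! (j + m)) + 1, snd (P ! (j + m)))"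
    using lp_step[OF assms(3)] jn unfolding n_def by blast
  have gS: "g (Suc j) = fst (P ! Suc (j + m)) - fst (P ! Suc j) - r" unfolding g_def by simp
  have E1: "P ! Suc j = (fst (P ! j) + 1, snd (P ! j))"
    using stj stm j(3,4) gS unfolding g_def by auto
  have N2: "P ! Suc (j + m) = (fst (P ! (j + m)), snd (P ! (j + m)) + 1)"
    using E1 stm j(3,4) gS unfolding g_def by auto
  have g0: "g (Suc j) = 0" using E1 N2 j(3,4) gS unfolding g_def by auto
  have s1: "fst (P ! Suc (j + m)) + snd (P ! Suc (j + m)) = a + int (Suc (j + m))"
    using lp_sum[OF assms(3)] jn unfolding a_def n_def by blast
  have s2: "fst (P ! Suc j) + snd (P ! Suc j) = a + int (Suc j)"
    using lp_sum[OF assms(3)] sj unfolding a_def n_def by blast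
  have mrs: "int m = r + s" using assms(1,2) unfolding m_def by simp
  have eq: "equiv_rs r s (P ! Suc (j + m)) (P ! Suc j)"
    unfolding equiv_rs_def
    apply (rule exI[of _ 1])
    using s1 s2 mrs g0 gS by auto
  have EE: "E_entered P (Suc j)" unfolding E_entered_def using E1 sj n_def by simp
  have mpos: "m > 0" using assms(1,2) unfolding m_def by simp
  have NE: "\<not> E_entered P (Suc (j + m))" unfolding E_entered_def using N2 by simp
  show ?thesis unfolding valid_path_def using EE NE eq jn mpos unfolding n_def
    by (metis add_Suc_right less_add_same_cancel1 add_Suc)
qed

end
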